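(* Let $k$ be an algebraically closed field of characteristic $0$, $n\ge1$, $d\ge2$, let $f\in\mathrm{End}^1_d$ and $F=s_n(f)$ its $n$-th symmetric power. For $P\in\mathbb{P}^1$ let $H_P=\{\Phi\in\mathcal{F}^1_n:\Phi(P)=0\}$. Then the hyperplane $H_P$ is improper under $F$ if and only if $P$ is preperiodic under $f$.
   Context: $\mathcal{F}^1_n\cong\mathbb{P}^n$ is the projective space of binary forms of degree $n$; the Vieta map $\eta:(\mathbb{P}^1)^n\to\mathcal{F}^1_n$ sends $((a_1:b_1),\dots,(a_n:b_n))$ to $\prod_i (b_i x - a_i y)$. The $n$-th symmetric power of $f$ is the unique degree-$d$ endomorphism $F$ of $\mathcal{F}^1_n$ with $F(\eta(P_1,\dots,P_n))=\eta(f(P_1),\dots,f(P_n))$ for all $P_i\in\mathbb{P}^1$. A hypersurface $H\subset\mathbb{P}^n$ is improper under $F$ if for every irreducible component $Z$ of $H$ there exist integers $0\le i_0<\dots<i_n$ with $F^{i_0}(Z)\cap\dots\cap F^{i_n}(Z)\neq\varnothing$. $P$ is preperiodic under $f$ if $f^s(P)=f^t(P)$ for some distinct $s,t\ge0$. *)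

theory Defs
  imports "HOL-Computational_Algebra.Polynomial"
begin

definition alg_closed :: "'a::field itself \<Rightarrow> bool" where
  "alg_closed _ \<longleftrightarrow> (\<forall>p::'a poly. degree p \<noteq> 0 \<longrightarrow> (\<exists>x. poly p x = 0))"

text \<open>A binary form of degree m is encoded by a univariate polynomial phi of
  degree at most m (phi(t) = Phi(t,1)); its value at (a,b) is
  sum_i coeff phi i * a^i * b^(m-i).\<close>
definition heval :: "nat \<Rightarrow> 'a::comm_ring_1 poly \<Rightarrow> 'a \<times> 'a \<Rightarrow> 'a" where
  "heval m \<phi> P = (\<Sum>i\<le>m. coeff \<phi> i * fst P ^ i * snd P ^ (m - i))"

definition fmap :: "nat \<Rightarrow> 'a::comm_ring_1 poly \<Rightarrow> 'a poly \<Rightarrow> 'a \<times> 'a \<Rightarrow> 'a \<times> 'a" where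
  "fmap d A B P = (heval d A P, heval d B P)"

definition is_endo :: "nat \<Rightarrow> 'a::field poly \<Rightarrow> 'a poly \<Rightarrow> bool" where
  "is_endo d A B \<longleftrightarrow> degree A \<le> d \<and> degree B \<le> d \<and>
     (\<forall>P. P \<noteq> (0,0) \<longrightarrow> fmap d A B P \<noteq> (0,0))"

text \<open>Point of P^n = F^1_n: class of a nonzero form up to scaling.\<close>
definition pcls :: "'a::field poly \<Rightarrow> 'a poly set" where
  "pcls \<phi> = {smult c \<phi> | c. c \<noteq> 0}"

definition vieta :: "nat \<Rightarrow> (nat \<Rightarrow> 'a \<times> 'a) \<Rightarrow> 'a::field poly" where
  "vieta n p = (\<Prod>i<n. [:- fst (p i), snd (p i):])"

text \<open>Image of a set of points of F^1_n under the n-th symmetric power of g,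
  determined by F(eta(P_1..P_n)) = eta(g P_1, .., g P_n).\<close>
definition sym_img :: "nat \<Rightarrow> ('a \<times> 'a \<Rightarrow> 'a \<times> 'a) \<Rightarrow> 'a::field poly set set \<Rightarrow> 'a poly set set" where
  "sym_img n g S = {pcls (vieta n (g \<circ> p)) | p. (\<forall>i<n. p i \<noteq> (0,0)) \<and> pcls (vieta n p) \<in> S}"

definition hyperplane_at :: "nat \<Rightarrow> 'a::field \<times> 'a \<Rightarrow> 'a poly set set" where
  "hyperplane_at n P = {pcls \<phi> | \<phi>. \<phi> \<noteq> 0 \<and> degree \<phi> \<le> n \<and> heval n \<phi> P = 0}"

text \<open>Improperness for an irreducible hypersurface Z (its only component is Z itself).\<close>
definition improper_irred :: "nat \<Rightarrow> ('x set \<Rightarrow> 'x set) \<Rightarrow> 'x set \<Rightarrow> bool" where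
  "improper_irred n Fimg Z \<longleftrightarrow>
     (\<exists>\<iota>::nat \<Rightarrow> nat. strict_mono_on {0..n} \<iota> \<and> (\<Inter>j\<in>{0..n}. (Fimg ^^ \<iota> j) Z) \<noteq> {})"

definition pequiv :: "'a::field \<times> 'a \<Rightarrow> 'a \<times> 'a \<Rightarrow> bool" where
  "pequiv P Q \<longleftrightarrow> fst P * snd Q = snd P * fst Q"

definition preperiodic :: "('a::field \<times> 'a \<Rightarrow> 'a \<times> 'a) \<Rightarrow> 'a \<times> 'a \<Rightarrow> bool" where
  "preperiodic g P \<longleftrightarrow> (\<exists>s t. s \<noteq> t \<and> pequiv ((g ^^ s) P) ((g ^^ t) P))"

end

theory Submission
  imports Defs
begin

lemma heval_ynz:
  fixes \<phi> :: "'a::field poly"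
  assumes "degree \<phi> \<le> n" "y \<noteq> 0"
  shows "heval n \<phi> (x,y) = y^n * poly \<phi> (x/y)"
proof -
  have "poly \<phi> (x/y) = (\<Sum>i\<le>n. coeff \<phi> i * (x/y)^i)"
    using assms(1) unfolding poly_altdef
    by (intro sum.mono_neutral_left) (auto simp: coeff_eq_0)
  hence "y^n * poly \<phi> (x/y) = (\<Sum>i\<le>n. coeff \<phi> i * (y^n * (x/y)^i))"
    by (simp add: sum_distrib_left algebra_simps)
  also have "\<dots> = (\<Sum>i\<le>n. coeff \<phi> i * x^i * y^(n-i))"
  proof (rule sum.cong)
    fix i assume "i \<in> {..n}"
    hence "y^n = y^i * y^(n-i)" by (simp add: power_add[symmetric])
    thus "coeff \<phi> i * (y^n * (x/y)^i) = coeff \<phi> i * x^i * y^(n-i)"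
      using assms(2) by (simp add: power_divide field_simps)
  qed simp
  finally show ?thesis by (simp add: heval_def)
qed

lemma heval_y0:
  fixes \<phi> :: "'a::field poly"
  shows "heval n \<phi> (x,0) = coeff \<phi> n * x^n"
proof -
  have "heval n \<phi> (x,0) = (\<Sum>i\<in>{n}. coeff \<phi> i * x^i * 0^(n-i))"
    unfolding heval_def fst_conv snd_conv by (rule sum.mono_neutral_right) auto
  thus ?thesis by simp
qed

lemma poly_vieta: "poly (vieta n r) z = (\<Prod>i<n. snd (r i) * z - fst (r i))"
  by (simp add: vieta_def poly_prod algebra_simps)

lemma vieta_Suc: "vieta (Suc n) r = vieta n r * [:- fst (r n), snd (r n):]"
  by (simp add: vieta_def)

lemma degree_vieta: "degree (vieta n r) \<le> n"
proof (induction n)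
  case 0 thus ?case by (simp add: vieta_def)
next
  case (Suc n)
  have "degree (vieta (Suc n) r) \<le> degree (vieta n r) + degree [:- fst (r n), snd (r n):]"
    unfolding vieta_Suc by (rule degree_mult_le)
  also have "\<dots> \<le> Suc n" using Suc by simp
  finally show ?case .
qed

lemma coeff_vieta: "coeff (vieta n r) n = (\<Prod>i<n. snd (r i))"
proof (induction n)
  case 0 thus ?case by (simp add: vieta_def)
next
  case (Suc n)
  have "coeff (vieta n r) (Suc n) = 0" using degree_vieta[of n r] by (simp add: coeff_eq_0)
  thus ?case using Suc by (simp add: vieta_Suc mult_pCons_right coeff_pCons)
qed

lemma vieta_nz: "(\<forall>i<n. r i \<noteq> (0,0)) \<Longrightarrow> vieta n r \<noteq> 0"
  unfolding vieta_def by (subst prod_zero_iff) (auto, metis prod.collapse)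

lemma heval_vieta_zero:
  fixes Q :: "'a::field \<times> 'a"
  assumes "Q \<noteq> (0,0)"
  shows "heval n (vieta n r) Q = 0 \<longleftrightarrow> (\<exists>j<n. pequiv (r j) Q)"
proof (cases "snd Q = 0")
  case True
  then obtain x where Q: "Q = (x,0)" and x: "x \<noteq> 0" using assms by (cases Q) auto
  show ?thesis using x by (auto simp: Q heval_y0 coeff_vieta pequiv_def)
next
  case False
  obtain x y where Q: "Q = (x,y)" by (cases Q)
  with False have y: "y \<noteq> 0" by simp
  have "heval n (vieta n r) Q = y^n * (\<Prod>i<n. snd (r i) * (x/y) - fst (r i))"
    using y by (simp add: Q heval_ynz degree_vieta poly_vieta)
  moreover have "\<And>i. (snd (r i) * (x/y) - fst (r i) = 0) \<longleftrightarrow> pequiv (r i) Q"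
    using y by (auto simp: pequiv_def Q field_simps)
  ultimately show ?thesis using y by auto
qed

lemma heval_scale:
  fixes A :: "'a::field poly"
  shows "heval d A (c*x, c*y) = c^d * heval d A (x,y)"
  unfolding heval_def fst_conv snd_conv sum_distrib_left
proof (rule sum.cong)
  fix i assume "i \<in> {..d}"
  hence "c^d = c^i * c^(d-i)" by (simp add: power_add[symmetric])
  thus "coeff A i * (c * x) ^ i * (c * y) ^ (d - i) = c ^ d * (coeff A i * x ^ i * y ^ (d - i))"
    by (simp add: power_mult_distrib)
qed simp

lemma pequiv_scale:
  fixes P Q :: "'a::field \<times> 'a"
  assumes "pequiv P Q" "P \<noteq> (0,0)" "Q \<noteq> (0,0)"
  shows "\<exists>c. c \<noteq> 0 \<and> P = (c * fst Q, c * snd Q)"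
proof -
  obtain a b where P: "P = (a,b)" by (cases P)
  obtain x y where Q: "Q = (x,y)" by (cases Q)
  have e: "a * y = b * x" using assms(1) by (simp add: pequiv_def P Q)
  show ?thesis
  proof (cases "x = 0")
    case True
    then have y: "y \<noteq> 0" using assms(3) Q by simp
    have "a = 0" using e True y by simp
    hence "b \<noteq> 0" using assms(2) P by simp
    thus ?thesis using True y \<open>a=0\<close> by (intro exI[of _ "b/y"]) (simp add: P Q)
  next
    case False
    have "a \<noteq> 0"
    proof
      assume "a = 0" hence "b = 0" using e False by simp
      thus False using assms(2) P \<open>a=0\<close> by simp
    qed
    have "b = (a/x) * y" using e False by (simp add: field_simps)
    thus ?thesis using False \<open>a\<noteq>0\<close> by (intro exI[of _ "a/x"]) (simp add: P Q)
  qed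
qed

lemma fmap_nz: "is_endo d A B \<Longrightarrow> P \<noteq> (0,0) \<Longrightarrow> fmap d A B P \<noteq> (0,0)"
  by (cases P) (auto simp: is_endo_def)

lemma fmap_pequiv:
  assumes "is_endo d A B" "pequiv P Q" "P \<noteq> (0,0)" "Q \<noteq> (0,0)"
  shows "pequiv (fmap d A B P) (fmap d A B Q)"
proof -
  obtain c where c: "c \<noteq> 0" "P = (c * fst Q, c * snd Q)" using pequiv_scale[OF assms(2-4)] by blast
  have "fmap d A B P = (c^d * fst (fmap d A B Q), c^d * snd (fmap d A B Q))"
    by (cases Q) (simp add: c(2) fmap_def heval_scale)
  thus ?thesis by (simp add: pequiv_def)
qed

lemma pequiv_sym: "pequiv P Q \<Longrightarrow> pequiv Q P"
  by (simp add: pequiv_def mult.commute)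

lemma pequiv_refl: "pequiv P P"
  by (simp add: pequiv_def mult.commute)

lemma pequiv_trans:
  assumes "pequiv P Q" "pequiv Q R" "P \<noteq> (0,0)" "Q \<noteq> (0,0)" "R \<noteq> (0,0)"
  shows "pequiv P R"
proof -
  obtain c where c: "c \<noteq> 0" "P = (c * fst Q, c * snd Q)" using pequiv_scale[OF assms(1,3,4)] by blast
  obtain e where e: "e \<noteq> 0" "Q = (e * fst R, e * snd R)" using pequiv_scale[OF assms(2,4,5)] by blast
  show ?thesis using c e by (simp add: pequiv_def)
qed

lemma pcls_smult: "c \<noteq> 0 \<Longrightarrow> pcls (smult c \<phi>) = pcls \<phi>"
proof -
  assume c: "c \<noteq> 0"
  show ?thesis unfolding pcls_def
  proof (rule set_eqI, rule iffI)
    fix p assume "p \<in> {smult x (smult c \<phi>) |x. x \<noteq> 0}"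
    then obtain x where "x \<noteq> 0" "p = smult x (smult c \<phi>)" by blast
    thus "p \<in> {smult x \<phi> |x. x \<noteq> 0}" using c by (intro CollectI exI[of _ "x*c"]) simp
  next
    fix p assume "p \<in> {smult x \<phi> |x. x \<noteq> 0}"
    then obtain x where "x \<noteq> 0" "p = smult x \<phi>" by blast
    thus "p \<in> {smult x (smult c \<phi>) |x. x \<noteq> 0}" using c by (intro CollectI exI[of _ "x/c"]) simp
  qed
qed

lemma vieta_pequiv:
  assumes "\<forall>i<n. pequiv (a i) (b i) \<and> a i \<noteq> (0,0) \<and> b i \<noteq> (0,0)"
  shows "\<exists>c. c \<noteq> 0 \<and> vieta n a = smult c (vieta n b)"
  using assms
proof (induction n)
  case 0 thus ?case by (intro exI[of _ 1]) (simp add: vieta_def)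
next
  case (Suc n)
  then obtain c where c: "c \<noteq> 0" "vieta n a = smult c (vieta n b)" by auto
  obtain e where e: "e \<noteq> 0" "a n = (e * fst (b n), e * snd (b n))"
    using pequiv_scale Suc.prems by blast
  have f: "[:- fst (a n), snd (a n):] = smult e [:- fst (b n), snd (b n):]"
    using e by simp
  have "vieta (Suc n) a = smult c (vieta n b) * smult e [:- fst (b n), snd (b n):]"
    by (simp only: vieta_Suc f c(2))
  also have "\<dots> = smult (c*e) (vieta (Suc n) b)"
    by (simp only: vieta_Suc mult_smult_left mult_smult_right smult_smult mult.commute)
  finally show ?case using c e by (intro exI[of _ "c*e"]) simp
qed

lemma heval_smult: "heval n (smult c \<phi>) Q = c * heval n \<phi> Q"
  by (simp add: heval_def sum_distrib_left mult.assoc)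

lemma orbit_nz: "is_endo d A B \<Longrightarrow> P \<noteq> (0,0) \<Longrightarrow> (fmap d A B ^^ m) P \<noteq> (0,0)"
  by (induction m) (auto simp: fmap_nz)

lemma roots_bound:
  fixes \<phi> :: "'a::field poly"
  assumes "\<phi> \<noteq> 0" "degree \<phi> \<le> n"
    and Q: "\<forall>j\<le>n. Q j \<noteq> (0,0) \<and> heval n \<phi> (Q j) = 0"
    and D: "\<forall>j\<le>n. \<forall>k\<le>n. j \<noteq> k \<longrightarrow> \<not> pequiv (Q j) (Q k)"
  shows False
proof -
  define J where "J = {j\<in>{..n}. snd (Q j) \<noteq> 0}"
  define h where "h j = fst (Q j) / snd (Q j)" for j
  have inj: "inj_on h J"
  proof (rule inj_onI)
    fix j k assume jk: "j \<in> J" "k \<in> J" "h j = h k"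
    hence "pequiv (Q j) (Q k)" by (auto simp: J_def h_def pequiv_def field_simps)
    thus "j = k" using D jk by (auto simp: J_def)
  qed
  have sub: "h ` J \<subseteq> {x. poly \<phi> x = 0}"
  proof
    fix z assume "z \<in> h ` J"
    then obtain j where j: "j \<in> J" "z = h j" by blast
    obtain x y where Qj: "Q j = (x,y)" by (cases "Q j")
    have y: "y \<noteq> 0" using j Qj by (simp add: J_def)
    have "0 = y^n * poly \<phi> (x/y)" using Q j heval_ynz[OF assms(2) y, of x] Qj
      by (auto simp: J_def)
    thus "z \<in> {x. poly \<phi> x = 0}" using y j Qj by (simp add: h_def)
  qed
  have "card J = card (h ` J)" using inj by (simp add: card_image)
  also have "\<dots> \<le> card {x. poly \<phi> x = 0}"
    by (rule card_mono[OF poly_roots_finite[OF assms(1)] sub])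
  also have "\<dots> \<le> degree \<phi>" by (rule card_poly_roots_bound[OF assms(1)])
  finally have cJ: "card J \<le> degree \<phi>" .
  show False
  proof (cases "J = {..n}")
    case True thus False using cJ assms(2) by simp
  next
    case False
    then obtain j0 where j0: "j0 \<le> n" "snd (Q j0) = 0" by (auto simp: J_def)
    obtain x where Qj0: "Q j0 = (x,0)" using j0 by (cases "Q j0") auto
    have x: "x \<noteq> 0" using Q j0 Qj0 by auto
    have "coeff \<phi> n = 0" using Q j0 Qj0 x heval_y0[of n \<phi> x] by auto
    hence "degree \<phi> \<noteq> n" using assms(1) by (metis leading_coeff_0_iff)
    hence dl: "degree \<phi> < n" using assms(2) by simp
    have "{..n} - {j0} \<subseteq> J"
    proof
      fix k assume k: "k \<in> {..n} - {j0}"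
      show "k \<in> J"
      proof (rule ccontr)
        assume "k \<notin> J"
        hence "snd (Q k) = 0" using k by (auto simp: J_def)
        hence "pequiv (Q k) (Q j0)" using Qj0 by (simp add: pequiv_def)
        thus False using D k j0 by auto
      qed
    qed
    hence "card ({..n} - {j0}) \<le> card J" by (intro card_mono) (auto simp: J_def)
    moreover have "card ({..n} - {j0}) = n" using j0 by simp
    ultimately show False using cJ dl by simp
  qed
qed

lemma mem_pcls: "x \<in> pcls \<phi> \<longleftrightarrow> (\<exists>c. c \<noteq> 0 \<and> x = smult c \<phi>)"
  unfolding pcls_def by blast

lemma mem_hyp: "X \<in> hyperplane_at n P \<longleftrightarrow> (\<exists>\<phi>. X = pcls \<phi> \<and> \<phi> \<noteq> 0 \<and> degree \<phi> \<le> n \<and> heval n \<phi> P = 0)"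
  unfolding hyperplane_at_def by blast

lemma mem_sym: "X \<in> sym_img n g S \<longleftrightarrow> (\<exists>p. X = pcls (vieta n (g \<circ> p)) \<and> (\<forall>i<n. p i \<noteq> (0,0)) \<and> pcls (vieta n p) \<in> S)"
  unfolding sym_img_def by blast

lemma img_sub:
  assumes e: "is_endo d A B" and Q: "Q \<noteq> (0,0)"
    and S: "S \<subseteq> hyperplane_at n Q"
  shows "sym_img n (fmap d A B) S \<subseteq> hyperplane_at n (fmap d A B Q)"
proof
  fix X assume "X \<in> sym_img n (fmap d A B) S"
  then obtain p where p: "X = pcls (vieta n (fmap d A B \<circ> p))" "\<forall>i<n. p i \<noteq> (0,0)"
    "pcls (vieta n p) \<in> S" unfolding mem_sym by blast
  have "pcls (vieta n p) \<in> hyperplane_at n Q" by (rule subsetD[OF S p(3)])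
  then obtain \<phi> where \<phi>: "pcls (vieta n p) = pcls \<phi>" "heval n \<phi> Q = 0"
    unfolding mem_hyp by blast
  have "vieta n p \<in> pcls (vieta n p)" unfolding mem_pcls by (intro exI[of _ 1]) simp
  then obtain c where "vieta n p = smult c \<phi>" unfolding \<phi>(1) mem_pcls by blast
  hence "heval n (vieta n p) Q = 0" using \<phi>(2) by (simp add: heval_smult)
  then obtain j where j: "j < n" "pequiv (p j) Q" using heval_vieta_zero[OF Q] by blast
  have "pequiv ((fmap d A B \<circ> p) j) (fmap d A B Q)"
    using fmap_pequiv[OF e j(2)] p(2) j Q by simp
  hence h: "heval n (vieta n (fmap d A B \<circ> p)) (fmap d A B Q) = 0"
    using heval_vieta_zero[OF fmap_nz[OF e Q]] j by blast
  have nz: "vieta n (fmap d A B \<circ> p) \<noteq> 0"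
    using p(2) fmap_nz[OF e] by (intro vieta_nz) simp
  show "X \<in> hyperplane_at n (fmap d A B Q)"
    unfolding mem_hyp by (rule exI[of _ "vieta n (fmap d A B \<circ> p)"]) (simp add: p(1) nz h degree_vieta)
qed

lemma iter_sub:
  assumes e: "is_endo d A B" and P: "P \<noteq> (0,0)"
  shows "(sym_img n (fmap d A B) ^^ i) (hyperplane_at n P) \<subseteq> hyperplane_at n ((fmap d A B ^^ i) P)"
proof (induction i)
  case 0 thus ?case by simp
next
  case (Suc i)
  show ?case using img_sub[OF e orbit_nz[OF e P] Suc] by simp
qed

lemma iter_mem:
  assumes e: "is_endo d A B" and r: "\<forall>i<n. r i \<noteq> (0,0)"
    and X: "pcls (vieta n r) \<in> S"
  shows "pcls (vieta n ((fmap d A B ^^ i) \<circ> r)) \<in> (sym_img n (fmap d A B) ^^ i) S"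
proof (induction i)
  case 0 thus ?case using X by (simp add: o_def)
next
  case (Suc i)
  have nz: "\<forall>j<n. ((fmap d A B ^^ i) \<circ> r) j \<noteq> (0,0)"
  proof (intro allI impI)
    fix j assume "j < n"
    thus "((fmap d A B ^^ i) \<circ> r) j \<noteq> (0,0)" using r orbit_nz[OF e, of "r j" i] by simp
  qed
  have "pcls (vieta n (fmap d A B \<circ> ((fmap d A B ^^ i) \<circ> r))) \<in> sym_img n (fmap d A B) ((sym_img n (fmap d A B) ^^ i) S)"
    unfolding mem_sym by (rule exI[of _ "(fmap d A B ^^ i) \<circ> r"], intro conjI refl nz Suc.IH)
  thus ?case by (simp add: o_def)
qed

lemma pcls_eq_smult:
  assumes "pcls \<phi> = pcls \<psi>" shows "\<exists>c. \<phi> = smult c \<psi>"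
proof -
  have "\<phi> \<in> pcls \<phi>" unfolding mem_pcls by (intro exI[of _ 1]) simp
  thus ?thesis unfolding assms mem_pcls by blast
qed

lemma orbit_shift:
  assumes e: "is_endo d A B" and P: "P \<noteq> (0,0)"
    and st: "pequiv ((fmap d A B ^^ s) P) ((fmap d A B ^^ t) P)"
  shows "pequiv ((fmap d A B ^^ (s+a)) P) ((fmap d A B ^^ (t+a)) P)"
proof (induction a)
  case 0 thus ?case using st by simp
next
  case (Suc a)
  show ?case using fmap_pequiv[OF e Suc orbit_nz[OF e P] orbit_nz[OF e P]] by simp
qed

lemma orbit_period:
  assumes e: "is_endo d A B" and P: "P \<noteq> (0,0)" and "s < t"
    and st: "pequiv ((fmap d A B ^^ s) P) ((fmap d A B ^^ t) P)"
    and x: "s \<le> x"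
  shows "pequiv ((fmap d A B ^^ x) P) ((fmap d A B ^^ (x + k*(t-s))) P)"
proof (induction k)
  case 0 thus ?case by (simp add: pequiv_refl)
next
  case (Suc k)
  have "pequiv ((fmap d A B ^^ (s + (x + k*(t-s) - s))) P) ((fmap d A B ^^ (t + (x + k*(t-s) - s))) P)"
    by (rule orbit_shift[OF e P st])
  moreover have "s + (x + k*(t-s) - s) = x + k*(t-s)" using x by simp
  moreover have "t + (x + k*(t-s) - s) = x + Suc k*(t-s)" using x \<open>s<t\<close> by simp
  ultimately have "pequiv ((fmap d A B ^^ (x + k*(t-s))) P) ((fmap d A B ^^ (x + Suc k*(t-s))) P)"
    by simp
  thus ?case by (rule pequiv_trans[OF Suc.IH _ orbit_nz[OF e P] orbit_nz[OF e P] orbit_nz[OF e P]])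
qed

lemma orbit_mod:
  assumes e: "is_endo d A B" and P: "P \<noteq> (0,0)" and "s < t"
    and st: "pequiv ((fmap d A B ^^ s) P) ((fmap d A B ^^ t) P)"
    and x: "s \<le> x" and y: "s \<le> y" and m: "int x mod int (t-s) = int y mod int (t-s)"
  shows "pequiv ((fmap d A B ^^ x) P) ((fmap d A B ^^ y) P)"
proof -
  have m': "x mod (t-s) = y mod (t-s)" using m by (metis of_nat_eq_iff zmod_int)
  have gen: "pequiv ((fmap d A B ^^ x') P) ((fmap d A B ^^ y') P)"
    if "s \<le> x'" "x' \<le> y'" "x' mod (t-s) = y' mod (t-s)" for x' y'
  proof -
    have "(t-s) dvd (y' - x')" using mod_eq_dvd_iff_nat[OF that(2), of "t-s"] that(3) by metis
    then obtain k where "y' - x' = (t-s) * k" by blast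
    hence "y' = x' + k*(t-s)" using that by (simp add: mult.commute)
    thus ?thesis using orbit_period[OF e P \<open>s<t\<close> st that(1)] by simp
  qed
  show ?thesis
  proof (cases "x \<le> y")
    case True show ?thesis using gen[OF x True m'] .
  next
    case False hence "y \<le> x" by simp
    from gen[OF y this m'[symmetric]] show ?thesis by (rule pequiv_sym)
  qed
qed

theorem mainTheorem11:
  fixes A B :: "'k::field_char_0 poly" and n d :: nat and P :: "'k \<times> 'k"
  assumes "alg_closed TYPE('k)"
    and "n \<ge> 1" and "d \<ge> 2"
    and "is_endo d A B"
    and "P \<noteq> (0,0)"
  shows "improper_irred n (sym_img n (fmap d A B)) (hyperplane_at n P)
         \<longleftrightarrow> preperiodic (fmap d A B) P"
proof -
  note e = assms(4) and P = assms(5)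
  define g where "g = fmap d A B"
  define F where "F = sym_img n g"
  define H where "H = hyperplane_at n P"
  define orb where "orb m = (g ^^ m) P" for m
  have onz: "orb m \<noteq> (0,0)" for m unfolding orb_def g_def by (rule orbit_nz[OF e P])
  have "improper_irred n F H \<longleftrightarrow> preperiodic g P"
  proof
    assume "improper_irred n F H"
    then obtain \<iota> X where \<iota>: "strict_mono_on {0..n} \<iota>"
      and X: "X \<in> (\<Inter>j\<in>{0..n}. (F ^^ \<iota> j) H)"
      unfolding improper_irred_def by blast
    show "preperiodic g P"
    proof (rule ccontr)
      assume np: "\<not> preperiodic g P"
      have Xh: "X \<in> hyperplane_at n (orb (\<iota> j))" if "j \<le> n" for j
      proof -
        have "X \<in> (F ^^ \<iota> j) H" using X that by auto
        thus ?thesis using iter_sub[OF e P, where n=n and i="\<iota> j"] unfolding F_def H_def g_def orb_def by blast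
      qed
      obtain \<phi> where \<phi>: "X = pcls \<phi>" "\<phi> \<noteq> 0" "degree \<phi> \<le> n"
        using Xh[of 0] unfolding mem_hyp by auto
      have hz: "heval n \<phi> (orb (\<iota> j)) = 0" if jn: "j \<le> n" for j
      proof -
        obtain \<psi> where \<psi>: "X = pcls \<psi>" "heval n \<psi> (orb (\<iota> j)) = 0"
          using Xh[OF jn] unfolding mem_hyp by auto
        obtain c where "\<phi> = smult c \<psi>" using pcls_eq_smult \<phi>(1) \<psi>(1) by metis
        thus ?thesis using \<psi>(2) by (simp add: heval_smult)
      qed
      have inj: "\<iota> j \<noteq> \<iota> k" if "j \<le> n" "k \<le> n" "j \<noteq> k" for j k
      proof (cases "j < k")
        case True thus ?thesis using strict_mono_onD[OF \<iota>, of j k] that by simp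
      next
        case False hence "k < j" using that by simp
        thus ?thesis using strict_mono_onD[OF \<iota>, of k j] that by simp
      qed
      show False
      proof (rule roots_bound[OF \<phi>(2,3), of "\<lambda>j. orb (\<iota> j)"])
        show "\<forall>j\<le>n. orb (\<iota> j) \<noteq> (0, 0) \<and> heval n \<phi> (orb (\<iota> j)) = 0" using onz hz by simp
        show "\<forall>j\<le>n. \<forall>k\<le>n. j \<noteq> k \<longrightarrow> \<not> pequiv (orb (\<iota> j)) (orb (\<iota> k))"
          using np inj unfolding preperiodic_def orb_def by metis
      qed
    qed
  next
    assume "preperiodic g P"
    then obtain s0 t0 where "s0 \<noteq> t0" "pequiv (orb s0) (orb t0)"
      unfolding preperiodic_def orb_def by blast
    then obtain s t where st: "s < t" "pequiv (orb s) (orb t)"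
      using pequiv_sym by (metis linorder_neqE_nat)
    have st': "pequiv ((fmap d A B ^^ s) P) ((fmap d A B ^^ t) P)"
      using st(2) by (simp add: orb_def g_def)
    define p where "p = t - s"
    have omod: "pequiv (orb x) (orb y)" if "s \<le> x" "s \<le> y" "int x mod int p = int y mod int p" for x y
      using orbit_mod[OF e P st(1) st' that[unfolded p_def]] by (simp add: orb_def g_def)
    define \<iota> where "\<iota> j = (if j = 0 then s else t + j - 1)" for j
    define q where "q m = orb (t + m)" for m
    define X where "X = pcls (vieta n q)"
    have mem: "X \<in> (F ^^ \<iota> j) H" if j: "j \<le> n" for j
    proof -
      define i where "i = \<iota> j"
      define kk where "kk = (if j = 0 then 0 else j - 1)"
      define ee where "ee m = nat ((int (t+m) - int i) mod int p)" for m
      define r where "r m = orb (ee m)" for m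
      have p0: "p > 0" using st(1) by (simp add: p_def)
      have isl: "s \<le> i" using st(1) by (auto simp: i_def \<iota>_def)
      have kk: "kk < n" using j assms(2) by (auto simp: kk_def)
      have eek: "ee kk = 0"
      proof (cases "j = 0")
        case True
        hence "int (t + kk) - int i = int p" using st(1) by (simp add: kk_def i_def \<iota>_def p_def)
        thus ?thesis by (simp add: ee_def)
      next
        case False
        hence "int (t + kk) - int i = 0" by (simp add: kk_def i_def \<iota>_def)
        thus ?thesis by (simp add: ee_def)
      qed
      have rnz: "\<forall>m<n. r m \<noteq> (0,0)" using onz by (simp add: r_def)
      have "heval n (vieta n r) P = 0"
      proof -
        have "pequiv (r kk) P" using eek pequiv_refl[of P] by (simp add: r_def orb_def)
        thus ?thesis using heval_vieta_zero[OF P, of n r] kk by blast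
      qed
      hence "pcls (vieta n r) \<in> H" unfolding H_def mem_hyp
        using vieta_nz[OF rnz] degree_vieta by blast
      from iter_mem[OF e rnz this, of i]
      have M: "pcls (vieta n ((g ^^ i) \<circ> r)) \<in> (F ^^ i) H" by (simp add: F_def g_def)
      have gr: "((g ^^ i) \<circ> r) m = orb (i + ee m)" for m
        by (simp add: r_def orb_def funpow_add)
      have pw: "\<forall>m<n. pequiv (((g ^^ i) \<circ> r) m) (q m) \<and> ((g ^^ i) \<circ> r) m \<noteq> (0,0) \<and> q m \<noteq> (0,0)"
      proof (intro allI impI conjI)
        fix m assume "m < n"
        have "int (i + ee m) mod int p = (int i + (int (t+m) - int i) mod int p) mod int p"
          using p0 by (simp add: ee_def)
        also have "\<dots> = int (t+m) mod int p" by (simp add: mod_add_right_eq)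
        finally have "int (i + ee m) mod int p = int (t+m) mod int p" .
        thus "pequiv (((g ^^ i) \<circ> r) m) (q m)" unfolding gr q_def
          using omod[of "i + ee m" "t + m"] isl st(1) by simp
        show "((g ^^ i) \<circ> r) m \<noteq> (0,0)" unfolding gr by (rule onz)
        show "q m \<noteq> (0,0)" unfolding q_def by (rule onz)
      qed
      obtain c where "c \<noteq> 0" "vieta n ((g ^^ i) \<circ> r) = smult c (vieta n q)"
        using vieta_pequiv[OF pw] by blast
      hence "pcls (vieta n ((g ^^ i) \<circ> r)) = X" by (simp add: X_def pcls_smult)
      thus ?thesis using M by (simp add: i_def)
    qed
    have sm: "strict_mono_on {0..n} \<iota>"
    proof (rule strict_mono_onI)
      fix j k assume "j \<in> {0..n}" "k \<in> {0..n}" "j < k"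
      thus "\<iota> j < \<iota> k" using st(1) by (auto simp: \<iota>_def)
    qed
    have "X \<in> (\<Inter>j\<in>{0..n}. (F ^^ \<iota> j) H)" using mem by auto
    thus "improper_irred n F H" unfolding improper_irred_def using sm by blast
  qed
  thus ?thesis by (simp add: F_def H_def g_def)
qed

end
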